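(* Let $\mathbf A\in\mathcal S_{++}^n$. For any $\tau>0$ and any $(\mathbf W_0,\mathbf M_0)\in\mathcal D$, there exists a unique solution $(\mathbf W(t),\mathbf M(t))$, $t\in[0,\infty)$, of the ODE $(\ast)$ with initial condition $(\mathbf W_0,\mathbf M_0)$.
   Context: Let $n>k\ge1$ be integers. $\mathcal S_{++}^m$ denotes the $m\times m$ symmetric positive definite matrices; $\mathbf A\in\mathcal S_{++}^n$, and $\mathcal D:=\mathbb R^{k\times n}\times\mathcal S_{++}^k$. For a parameter $\tau>0$, consider the ODE $(\ast)$ on $\mathcal D$: $$\tfrac12\tfrac{d\mathbf W}{dt}=\mathbf M^{-1}\mathbf W\mathbf A-\mathbf W,\qquad \tau\tfrac{d\mathbf M}{dt}=\mathbf M^{-1}\mathbf W\mathbf A\mathbf W^\top\mathbf M^{-1}-\mathbf M.$$ A solution is a continuously differentiable map $t\mapsto(\mathbf W(t),\mathbf M(t))$ from $[0,\infty)$ into $\mathcal D$ satisfying $(\ast)$; in particular, $\mathbf M(t)$ stays positive definite. *)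

theory Defs
  imports "HOL-Analysis.Analysis"
begin

definition sym_posdef :: "real^'m^'m \<Rightarrow> bool" where
  "sym_posdef A \<longleftrightarrow> transpose A = A \<and> (\<forall>x. x \<noteq> 0 \<longrightarrow> x \<bullet> (A *v x) > 0)"

definition is_solution ::
  "real \<Rightarrow> real^'n^'n \<Rightarrow> real^'n^'k \<Rightarrow> real^'k^'k
    \<Rightarrow> (real \<Rightarrow> real^'n^'k) \<Rightarrow> (real \<Rightarrow> real^'k^'k) \<Rightarrow> bool" where
  "is_solution \<tau> A W0 M0 W M \<longleftrightarrow>
     W 0 = W0 \<and> M 0 = M0 \<and>
     (\<forall>t\<ge>0. sym_posdef (M t)) \<and>
     (\<exists>W' M'.
        continuous_on {0..} W' \<and> continuous_on {0..} M' \<and>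
        (\<forall>t\<ge>0. (W has_vector_derivative W' t) (at t within {0..}) \<and>
                 (M has_vector_derivative M' t) (at t within {0..}) \<and>
                 (1/2) *\<^sub>R W' t = matrix_inv (M t) ** W t ** A - W t \<and>
                 \<tau> *\<^sub>R M' t = matrix_inv (M t) ** W t ** A ** transpose (W t) ** matrix_inv (M t) - M t))"

end

theory Submission
  imports Defs
begin

lemma lip_cont:
  fixes G :: "'a::real_normed_vector \<Rightarrow> 'b::real_normed_vector"
  assumes lip: "\<And>x y. norm (G x - G y) \<le> L * norm (x - y)" and L: "0 \<le> L"
  shows "continuous_on S G"
proof -
  have "L-lipschitz_on S G"
    by (rule lipschitz_onI) (use lip L in \<open>auto simp: dist_norm\<close>)
  thus ?thesis by (rule lipschitz_on_continuous_on)
qed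

lemma exp_integral:
  fixes g :: real assumes "g > 0" "0 \<le> u"
  shows "((\<lambda>s. kk * exp (g * s)) has_integral (kk * (exp (g * u) - 1) / g)) {0..u}"
proof -
  have "((\<lambda>s. kk * exp (g * s)) has_integral ((kk * exp (g * u) / g) - (kk * exp (g * 0) / g))) {0..u}"
    apply (rule fundamental_theorem_of_calculus)
    using assms apply simp
    apply (auto intro!: derivative_eq_intros simp: has_real_derivative_iff_has_vector_derivative[symmetric])
    using assms by auto
  thus ?thesis using assms by (simp add: diff_divide_distrib right_diff_distrib)
qed

lemma picard_global:
  fixes G :: "'a::euclidean_space \<Rightarrow> 'a"
  assumes lip: "\<And>x y. norm (G x - G y) \<le> L * norm (x - y)" and L: "0 \<le> L"
    and bnd: "\<And>x. norm (G x) \<le> B" and T: "0 \<le> T"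
  shows "\<exists>f. f 0 = x0 \<and> continuous_on {0..T} f \<and>
     (\<forall>t\<in>{0..T}. (f has_vector_derivative G (f t)) (at t within {0..T}))"
proof -
  define g where "g = 2 * L + 1"
  have g: "g > 0" "L / g \<le> 1/2" using L by (auto simp: g_def field_simps)
  define c where "c t = max 0 (min T t)" for t :: real
  have c01: "c t \<in> {0..T}" for t using T by (auto simp: c_def)
  have cid: "t \<in> {0..T} \<Longrightarrow> c t = t" for t by (auto simp: c_def)
  have contc: "continuous_on UNIV c" unfolding c_def by (intro continuous_intros)
  have Gc: "continuous_on S G" for S by (rule lip_cont[OF lip L])
  define k where "k h s = G (exp (g * s) *\<^sub>R apply_bcontfun h s)" for h :: "real \<Rightarrow>\<^sub>C 'a" and s
  have kc: "continuous_on S (k h)" for h S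
    unfolding k_def by (intro continuous_on_compose2[OF Gc] continuous_intros) auto
  have kint: "k h integrable_on {0..u}" for h u
    by (rule integrable_continuous_real[OF kc])
  define P where "P h t = exp (- g * c t) *\<^sub>R (x0 + integral {0..c t} (k h))" for h t
  have Pb: "P h \<in> bcontfun" for h
  proof (rule bcontfun_normI)
    have "continuous_on {0..T} (\<lambda>u. integral {0..u} (k h))"
      by (rule indefinite_integral_continuous_1[OF kint])
    hence "continuous_on UNIV (\<lambda>t. integral {0..c t} (k h))"
      by (rule continuous_on_compose2[OF _ contc]) (use c01 in auto)
    moreover have "continuous_on UNIV (\<lambda>t. exp (- g * c t))"
      by (intro continuous_intros contc)
    ultimately show "continuous_on UNIV (P h)" unfolding P_def
      by (intro continuous_on_scaleR continuous_on_add continuous_on_const)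
    fix t
    have "norm (integral {0..c t} (k h)) \<le> B * (c t - 0)"
      by (rule integral_bound) (use c01[of t] kc bnd in \<open>auto simp: k_def\<close>)
    also have "\<dots> \<le> B * T" using c01[of t] order_trans[OF norm_ge_zero bnd[of 0]] by (intro mult_left_mono) auto
    finally have i: "norm (integral {0..c t} (k h)) \<le> B * T" .
    have e: "exp (- g * c t) \<le> 1" using c01[of t] g by auto
    have "norm (P h t) = exp (- g * c t) * norm (x0 + integral {0..c t} (k h))"
      by (simp add: P_def)
    also have "\<dots> \<le> 1 * (norm x0 + B * T)"
      by (rule mult_mono) (use e i norm_triangle_ineq[of x0 "integral {0..c t} (k h)"] in auto)
    finally show "norm (P h t) \<le> norm x0 + B * T" by simp
  qed
  define \<Psi> where "\<Psi> h = Bcontfun (P h)" for h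
  have \<Psi>a: "apply_bcontfun (\<Psi> h) = P h" for h
    unfolding \<Psi>_def using Pb by (simp add: Bcontfun_inverse)
  have contr: "dist (\<Psi> h1) (\<Psi> h2) \<le> 1/2 * dist h1 h2" for h1 h2
  proof (rule dist_bound)
    fix t
    define D where "D = dist h1 h2"
    define u where "u = c t"
    have u: "0 \<le> u" "u \<le> T" using c01 by (auto simp: u_def)
    have "norm (k h1 s - k h2 s) \<le> L * D * exp (g * s)" for s
    proof -
      have "norm (k h1 s - k h2 s) \<le> L * norm (exp (g * s) *\<^sub>R h1 s - exp (g * s) *\<^sub>R h2 s)"
        unfolding k_def by (rule lip)
      also have "\<dots> = L * (exp (g * s) * dist (h1 s) (h2 s))"
        by (simp add: dist_norm flip: scaleR_diff_right)
      also have "\<dots> \<le> L * (exp (g * s) * D)"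
        unfolding D_def by (intro mult_left_mono dist_bounded) (use L in auto)
      finally show ?thesis by (simp add: ac_simps)
    qed
    hence "norm (integral {0..u} (k h1) - integral {0..u} (k h2)) \<le> integral {0..u} (\<lambda>s. L * D * exp (g * s))"
      unfolding integral_diff[OF kint kint, symmetric]
      by (intro integral_norm_bound_integral integrable_diff kint)
        (auto intro!: integrable_continuous_real continuous_intros)
    also have "\<dots> = L * D * (exp (g * u) - 1) / g"
      by (rule integral_unique[OF exp_integral[OF g(1) u(1)]])
    finally have I: "norm (integral {0..u} (k h1) - integral {0..u} (k h2)) \<le> L * D * (exp (g * u) - 1) / g" .
    have "dist (\<Psi> h1 t) (\<Psi> h2 t) = exp (- g * u) * norm (integral {0..u} (k h1) - integral {0..u} (k h2))"
      unfolding \<Psi>a P_def dist_norm u_def[symmetric]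
      by (simp flip: scaleR_diff_right)
    also have "\<dots> \<le> exp (- g * u) * (L * D * (exp (g * u) - 1) / g)"
      by (intro mult_left_mono I) auto
    also have "\<dots> = (L / g) * D * (1 - exp (- g * u))"
      using g by (simp add: field_simps exp_minus exp_add[symmetric])
    also have "\<dots> \<le> (1/2) * D * 1"
      using g u L by (intro mult_mono) (auto simp: D_def)
    finally show "dist (\<Psi> h1 t) (\<Psi> h2 t) \<le> 1/2 * dist h1 h2" by (simp add: D_def)
  qed
  obtain h where h: "\<Psi> h = h"
    using banach_fix_type[of "1/2" \<Psi>] contr by auto
  define f where "f t = exp (g * c t) *\<^sub>R apply_bcontfun h t" for t
  have fc: "continuous_on S f" for S
    unfolding f_def by (intro continuous_intros continuous_on_subset[OF contc]) auto
  have kf: "k h s = G (f s)" if "s \<in> {0..T}" for s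
    using that by (simp add: k_def f_def cid)
  have feq: "f t = x0 + integral {0..t} (\<lambda>s. G (f s))" if t: "t \<in> {0..T}" for t
  proof -
    have "f t = exp (g * t) *\<^sub>R P h t" using h \<Psi>a[of h] t by (simp add: f_def cid)
    also have "\<dots> = x0 + integral {0..t} (k h)" using t by (simp add: P_def cid exp_minus)
    also have "integral {0..t} (k h) = integral {0..t} (\<lambda>s. G (f s))"
      by (rule integral_cong) (use t kf in auto)
    finally show ?thesis .
  qed
  have GFc: "continuous_on {0..T} (\<lambda>s. G (f s))"
    by (rule continuous_on_compose2[OF Gc fc]) auto
  show ?thesis
  proof (intro exI conjI ballI)
    show "f 0 = x0" using feq[of 0] T by simp
    show "continuous_on {0..T} f" by (rule fc)
    fix t assume t: "t \<in> {0..T}"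
    have "((\<lambda>u. x0 + integral {0..u} (\<lambda>s. G (f s))) has_vector_derivative G (f t)) (at t within {0..T})"
      using integral_has_vector_derivative[OF GFc t] by (auto intro!: derivative_eq_intros)
    thus "(f has_vector_derivative G (f t)) (at t within {0..T})"
      by (rule has_vector_derivative_transform[OF t feq, rotated]) (simp add: feq)
  qed
qed

lemma vnorm_sq: "norm (x::real^'n) ^ 2 = (\<Sum>i\<in>UNIV. (x$i)^2)"
  by (simp add: norm_vec_def L2_set_def sum_nonneg)

lemma mnorm_sq: "norm (A::real^'n^'m) ^ 2 = (\<Sum>i\<in>UNIV. norm (A$i) ^ 2)"
  by (simp add: norm_vec_def L2_set_def sum_nonneg)

lemma norm_mv: "norm ((A::real^'n^'m) *v x) \<le> norm A * norm x"
proof -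
  have "norm (A *v x) ^ 2 = (\<Sum>i\<in>UNIV. (inner (A$i) x)^2)"
    by (simp add: vnorm_sq matrix_vector_mul_component)
  also have "\<dots> \<le> (\<Sum>i\<in>UNIV. (norm (A$i) * norm x)^2)"
  proof (rule sum_mono)
    fix i
    have "\<bar>inner (A$i) x\<bar> \<le> norm (A$i) * norm x" by (rule Cauchy_Schwarz_ineq2)
    thus "(inner (A$i) x)^2 \<le> (norm (A$i) * norm x)^2"
      by (metis abs_le_square_iff abs_mult abs_norm_cancel)
  qed
  also have "\<dots> = (norm A * norm x)^2"
    by (simp add: mnorm_sq power_mult_distrib sum_distrib_right)
  finally show ?thesis
    by (rule power2_le_imp_le) simp
qed

lemma norm_transpose: "norm (transpose (A::real^'n^'m)) = norm A"
proof -
  have "norm (transpose A) ^ 2 = norm A ^ 2"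
    unfolding mnorm_sq vnorm_sq transpose_def
    by (simp, rule sum.swap)
  thus ?thesis by (simp add: power2_eq_iff_nonneg)
qed

lemma row_mm: "((A::real^'n^'m) ** B) $ i = transpose B *v (A $ i)"
proof -
  have "(A ** B) $ i = A $ i v* B"
    by (simp add: matrix_matrix_mult_def vector_matrix_mult_def vec_eq_iff)
  thus ?thesis by simp
qed

lemma norm_mm: "norm ((A::real^'n^'m) ** (B::real^'p^'n)) \<le> norm A * norm B"
proof -
  have "norm (A ** B) ^ 2 = (\<Sum>i\<in>UNIV. norm (transpose B *v (A $ i)) ^ 2)"
    by (simp add: mnorm_sq row_mm)
  also have "\<dots> \<le> (\<Sum>i\<in>UNIV. (norm B * norm (A$i)) ^ 2)"
    using norm_mv[of "transpose B"] unfolding norm_transpose by (intro sum_mono power_mono) auto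
  also have "\<dots> = norm B ^ 2 * (\<Sum>i\<in>UNIV. norm (A$i) ^ 2)"
    by (simp add: power_mult_distrib sum_distrib_left)
  also have "\<dots> = (norm A * norm B)^2"
    by (simp add: mnorm_sq[of A, symmetric] power_mult_distrib)
  finally show ?thesis
    by (rule power2_le_imp_le) simp
qed

lemma quad_bound: "\<bar>inner v ((M::real^'n^'n) *v v)\<bar> \<le> norm M * norm v ^ 2"
proof -
  have "\<bar>inner v (M *v v)\<bar> \<le> norm v * norm (M *v v)" by (rule Cauchy_Schwarz_ineq2)
  also have "\<dots> \<le> norm v * (norm M * norm v)" by (intro mult_left_mono norm_mv) auto
  finally show ?thesis by (simp add: power2_eq_square ac_simps)
qed

lemma matrix_add_rdistrib': "((B + C) ** A) = (B ** A) + (C ** A)"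
  by (simp add: matrix_matrix_mult_def vec_eq_iff sum.distrib[symmetric] distrib_right)

lemma matrix_diff_ldistrib: "((A::'a::ring_1^'n^'m) ** (B - C)) = (A ** B) - (A ** C)"
  by (simp add: matrix_matrix_mult_def vec_eq_iff sum_subtractf[symmetric] right_diff_distrib)

lemma matrix_diff_rdistrib: "(((B::'a::ring_1^'n^'m) - C) ** A) = (B ** A) - (C ** A)"
  by (simp add: matrix_matrix_mult_def vec_eq_iff sum_subtractf[symmetric] left_diff_distrib)

lemma prod_lip:
  fixes X1 X2 :: "real^'n^'m" and Y1 Y2 :: "real^'p^'n"
  assumes "norm X1 \<le> bx" "norm X2 \<le> bx" "norm (X1 - X2) \<le> ex * d"
    "norm Y1 \<le> bY" "norm Y2 \<le> bY" "norm (Y1 - Y2) \<le> ey * d"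
  shows "norm (X1 ** Y1 - X2 ** Y2) \<le> (ex * bY + bx * ey) * d"
    "norm (X1 ** Y1) \<le> bx * bY" "norm (X2 ** Y2) \<le> bx * bY"
proof -
  have bx: "0 \<le> bx" using assms(1) norm_ge_zero[of X1] by linarith
  have bY0: "0 \<le> bY" using assms(4) norm_ge_zero[of Y1] by linarith
  have "X1 ** Y1 - X2 ** Y2 = (X1 - X2) ** Y1 + X2 ** (Y1 - Y2)"
    by (simp add: matrix_diff_ldistrib matrix_diff_rdistrib)
  hence "norm (X1 ** Y1 - X2 ** Y2) \<le> norm ((X1 - X2) ** Y1) + norm (X2 ** (Y1 - Y2))"
    using norm_triangle_ineq by simp
  also have "\<dots> \<le> norm (X1 - X2) * norm Y1 + norm X2 * norm (Y1 - Y2)"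
    by (intro add_mono norm_mm)
  also have "\<dots> \<le> (ex * d) * bY + bx * (ey * d)"
    using assms bx bY0 order_trans[OF norm_ge_zero assms(3)] by (intro add_mono mult_mono) auto
  finally show "norm (X1 ** Y1 - X2 ** Y2) \<le> (ex * bY + bx * ey) * d" by (simp add: algebra_simps)
  have "norm X1 * norm Y1 \<le> bx * bY" using assms bx by (intro mult_mono) auto
  thus "norm (X1 ** Y1) \<le> bx * bY" using norm_mm[of X1 Y1] by linarith
  have "norm X2 * norm Y2 \<le> bx * bY" using assms bx by (intro mult_mono) auto
  thus "norm (X2 ** Y2) \<le> bx * bY" using norm_mm[of X2 Y2] by linarith
qed

definition pdc :: "real \<Rightarrow> real^'k^'k \<Rightarrow> bool" where
  "pdc c M \<longleftrightarrow> transpose M = M \<and> (\<forall>v. c * norm v ^ 2 \<le> inner v (M *v v))"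

lemma pdc_sym_posdef: fixes M :: "real^'k^'k" shows "c > 0 \<Longrightarrow> pdc c M \<Longrightarrow> sym_posdef M"
  unfolding pdc_def sym_posdef_def
proof (intro conjI allI impI)
  fix x :: "real^'k" assume "c > 0" "transpose M = M \<and> (\<forall>v. c * norm v ^ 2 \<le> inner v (M *v v))" "x \<noteq> 0"
  moreover have "0 < c * norm x ^ 2" using calculation by simp
  ultimately show "0 < inner x (M *v x)" by (meson order_less_le_trans)
qed auto

lemma quad_scale: "inner (a *\<^sub>R v) ((M::real^'k^'k) *v (a *\<^sub>R v)) = a^2 * inner v (M *v v)"
  by (simp add: matrix_vector_mult_scaleR power2_eq_square)

lemma sym_posdef_pdc:
  fixes M :: "real^'k^'k"
  assumes "sym_posdef M" shows "\<exists>c>0. pdc c M"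
proof -
  have ne: "sphere (0::real^'k) 1 \<noteq> {}"
    using norm_axis_1 by (metis mem_sphere_0 empty_iff)
  have "continuous_on (sphere 0 1) (\<lambda>v::real^'k. inner v (M *v v))"
    by (intro continuous_on_inner continuous_on_id matrix_vector_mult_linear_continuous_on)
  then obtain v0 where v0: "v0 \<in> sphere 0 1" "\<And>y. y \<in> sphere 0 1 \<Longrightarrow> inner v0 (M *v v0) \<le> inner y (M *v y)"
    using continuous_attains_inf[OF compact_sphere ne] by blast
  define c where "c = inner v0 (M *v v0)"
  have "v0 \<noteq> 0" using v0(1) by auto
  hence c: "c > 0" using assms unfolding sym_posdef_def c_def by auto
  have "c * norm v ^ 2 \<le> inner v (M *v v)" for v
  proof (cases "v = 0")
    case False
    hence n: "norm v > 0" by simp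
    have "c \<le> inner ((1/norm v) *\<^sub>R v) (M *v ((1/norm v) *\<^sub>R v))"
      unfolding c_def using False by (intro v0(2)) auto
    also have "\<dots> = (1/norm v)^2 * inner v (M *v v)"
      by (rule quad_scale)
    also have "\<dots> = inner v (M *v v) / norm v ^ 2"
      by (simp add: power_divide)
    finally show ?thesis using n by (simp add: field_simps)
  qed simp
  thus ?thesis using c assms unfolding pdc_def sym_posdef_def by auto
qed

lemma pdc_inv:
  fixes M :: "real^'k^'k"
  assumes "c > 0" "pdc c M"
  shows "M ** matrix_inv M = mat 1" "matrix_inv M ** M = mat 1"
proof -
  have "\<forall>x. M *v x = 0 \<longrightarrow> x = 0"
  proof (intro allI impI)
    fix x assume "M *v x = 0"
    hence "c * norm x ^ 2 \<le> 0" using assms(2) unfolding pdc_def by (metis inner_zero_right)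
    thus "x = 0" using assms(1) by (simp add: mult_le_0_iff)
  qed
  hence "invertible M" using matrix_left_invertible_ker invertible_left_inverse by blast
  hence "\<exists>A'. M ** A' = mat 1 \<and> A' ** M = mat 1" unfolding invertible_def by blast
  hence "M ** matrix_inv M = mat 1 \<and> matrix_inv M ** M = mat 1"
    unfolding matrix_inv_def by (rule someI_ex)
  thus "M ** matrix_inv M = mat 1" "matrix_inv M ** M = mat 1" by auto
qed

lemma pdc_inv_sym:
  fixes M :: "real^'k^'k"
  assumes "c > 0" "pdc c M"
  shows "transpose (matrix_inv M) = matrix_inv M"
proof -
  have tM: "transpose M = M" using assms(2) unfolding pdc_def by auto
  have "transpose (matrix_inv M) ** M = mat 1"
    using pdc_inv(1)[OF assms] tM by (metis matrix_transpose_mul transpose_mat)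
  hence "transpose (matrix_inv M) = transpose (matrix_inv M) ** (M ** matrix_inv M)"
    using pdc_inv(1)[OF assms] by simp
  also have "\<dots> = matrix_inv M"
    by (simp add: matrix_mul_assoc \<open>transpose (matrix_inv M) ** M = mat 1\<close>)
  finally show ?thesis .
qed

lemma pdc_inv_vec:
  fixes M :: "real^'k^'k"
  assumes "c > 0" "pdc c M"
  shows "norm (matrix_inv M *v v) \<le> norm v / c"
proof -
  define y where "y = matrix_inv M *v v"
  have My: "M *v y = v" unfolding y_def using pdc_inv(1)[OF assms] by (simp add: matrix_vector_mul_assoc)
  have "c * norm y ^ 2 \<le> inner y v" using assms(2) My unfolding pdc_def by metis
  also have "\<dots> \<le> norm y * norm v" by (rule norm_cauchy_schwarz)
  finally have "c * norm y ^ 2 \<le> norm y * norm v" .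
  hence "c * norm y \<le> norm v"
    by (cases "y = 0") (auto simp: power2_eq_square)
  thus ?thesis using assms(1) by (simp add: y_def field_simps)
qed

lemma pdc_inv_norm:
  fixes M :: "real^'k^'k"
  assumes "c > 0" "pdc c M"
  shows "norm (matrix_inv M) \<le> sqrt (real CARD('k)) / c"
proof -
  let ?P = "matrix_inv M"
  have row: "?P $ i = ?P *v axis i 1" for i
  proof -
    have "?P $ i = axis i 1 v* ?P"
      by (simp add: vector_matrix_mult_def axis_def vec_eq_iff if_distrib if_distribR cong: if_cong)
    also have "\<dots> = transpose ?P *v axis i 1" by simp
    finally show ?thesis using pdc_inv_sym[OF assms] by simp
  qed
  have "norm ?P ^ 2 = (\<Sum>i\<in>UNIV. norm (?P *v axis i 1) ^ 2)"
    by (simp add: mnorm_sq row)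
  also have "\<dots> \<le> (\<Sum>i\<in>(UNIV::'k set). (1 / c) ^ 2)"
  proof (intro sum_mono power_mono)
    fix i :: 'k
    show "norm (?P *v axis i 1) \<le> 1 / c" using pdc_inv_vec[OF assms, of "axis i 1"] by (simp add: norm_axis_1)
  qed auto
  also have "\<dots> = (sqrt (real CARD('k)) / c) ^ 2"
    by (simp add: power_divide)
  finally show ?thesis
    by (rule power2_le_imp_le) (use assms in auto)
qed

lemma mono_le:
  fixes f :: "real \<Rightarrow> real"
  assumes "a \<le> b" "\<And>s. s \<in> {a..b} \<Longrightarrow> (f has_real_derivative f' s) (at s within {a..b})"
    "\<And>s. s \<in> {a..b} \<Longrightarrow> f' s \<le> 0"
  shows "f b \<le> f a"
proof -
  obtain x where x: "x \<in> {a..b}" "f b - f a = f' x * (b - a)"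
    using mvt_very_simple[of a b f "\<lambda>s. (*) (f' s)"] assms(1,2)
    by (auto simp: has_field_derivative_def)
  have "f' x * (b - a) \<le> 0" using assms(1) assms(3)[OF x(1)] by (simp add: mult_nonpos_nonneg)
  thus ?thesis using x by simp
qed

lemma vd_fst: "(x has_vector_derivative D) F \<Longrightarrow> ((\<lambda>t. fst (x t)) has_vector_derivative fst D) F"
  by (rule bounded_linear.has_vector_derivative[OF bounded_linear_fst])

lemma vd_snd: "(x has_vector_derivative D) F \<Longrightarrow> ((\<lambda>t. snd (x t)) has_vector_derivative snd D) F"
  by (rule bounded_linear.has_vector_derivative[OF bounded_linear_snd])

lemma vd_normsq:
  assumes "(X has_vector_derivative D) (at t within S)"
  shows "((\<lambda>s. norm (X s) ^ 2) has_real_derivative 2 * inner (X t) D) (at t within S)"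
proof -
  have "((\<lambda>s. inner (X s) (X s)) has_vector_derivative (inner (X t) D + inner D (X t))) (at t within S)"
    by (rule bounded_bilinear.has_vector_derivative[OF bounded_bilinear_inner assms assms])
  thus ?thesis
    by (simp add: has_real_derivative_iff_has_vector_derivative power2_norm_eq_inner inner_commute)
qed

lemma bl_quad: "bounded_linear (\<lambda>M::real^'k^'k. inner v (M *v v))"
  apply (rule linear_conv_bounded_linear[THEN iffD1])
  apply (rule linearI)
   apply (simp add: matrix_vector_mult_add_rdistrib inner_add_right)
  apply (simp add: scaleR_matrix_vector_assoc[symmetric])
  done

lemma vd_quad:
  assumes "(X has_vector_derivative D) F"
  shows "((\<lambda>s. inner v ((X s :: real^'k^'k) *v v)) has_real_derivative inner v (D *v v)) F"
  using bounded_linear.has_vector_derivative[OF bl_quad assms, of v]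
  by (simp add: has_real_derivative_iff_has_vector_derivative)

lemma transpose_diff: "transpose (A - B) = transpose A - transpose (B::real^'n^'m)"
  by (simp add: transpose_def vec_eq_iff)

lemma transpose_add: "transpose (A + B) = transpose A + transpose (B::real^'n^'m)"
  by (simp add: transpose_def vec_eq_iff)

lemma bl_transpose: "bounded_linear (transpose :: real^'n^'m \<Rightarrow> real^'m^'n)"
  apply (rule linear_conv_bounded_linear[THEN iffD1])
  apply (rule linearI)
   apply (simp add: transpose_add)
  apply (simp add: transpose_scalar)
  done

lemma inner_mv: "inner v ((P::real^'n^'m) *v z) = inner (transpose P *v v) z"
  by (metis dot_lmul_matrix transpose_matrix_vector)

lemma Q_nonneg:
  fixes P :: "real^'k^'k" and W :: "real^'n^'k" and A :: "real^'n^'n"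
  assumes "transpose P = P" "sym_posdef A"
  shows "0 \<le> inner v ((P ** W ** A ** transpose W ** P) *v v)"
proof -
  define y where "y = transpose W *v (P *v v)"
  have "(P ** W ** A ** transpose W ** P) *v v = P *v (W *v (A *v y))"
    by (simp add: y_def matrix_vector_mul_assoc matrix_mul_assoc)
  hence "inner v ((P ** W ** A ** transpose W ** P) *v v) = inner y (A *v y)"
    using assms(1) by (simp add: inner_mv y_def)
  also have "0 \<le> inner y (A *v y)"
    using assms(2) unfolding sym_posdef_def by (cases "y = 0") (auto intro: less_imp_le)
  finally show ?thesis by simp
qed

lemma Q_sym:
  fixes P :: "real^'k^'k" and W :: "real^'n^'k" and A :: "real^'n^'n"
  assumes "transpose P = P" "transpose A = A"
  shows "transpose (P ** W ** A ** transpose W ** P) = P ** W ** A ** transpose W ** P"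
  using assms by (simp add: matrix_transpose_mul matrix_mul_assoc)

definition Fld :: "real \<Rightarrow> real^'n^'n \<Rightarrow> ((real^'n^'k) \<times> (real^'k^'k)) \<Rightarrow> ((real^'n^'k) \<times> (real^'k^'k))" where
  "Fld \<tau> A x = (2 *\<^sub>R (matrix_inv (snd x) ** fst x ** A - fst x),
     (1/\<tau>) *\<^sub>R (matrix_inv (snd x) ** fst x ** A ** transpose (fst x) ** matrix_inv (snd x) - snd x))"

locale sys =
  fixes A :: "real^'n^'n" and \<tau> :: real and W0 :: "real^'n^'k" and M0 :: "real^'k^'k"
  assumes A: "sym_posdef A" and tau: "\<tau> > 0" and M0: "sym_posdef M0"
begin

definition "c0 = (SOME c. c > 0 \<and> pdc c M0)"
lemma c0: "c0 > 0" "pdc c0 M0"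
  using someI_ex[OF sym_posdef_pdc[OF M0]] unfolding c0_def by auto

definition "c1 T = exp (- T / \<tau>) * c0"
definition "pb T = sqrt (real CARD('k)) / c1 T"
definition "al T = 4 * pb T * norm A"
definition "bW T = sqrt (exp (al T * T)) * norm W0"
definition "qq T = pb T ^ 2 * norm A * bW T ^ 2"
definition "bM T = sqrt (norm M0 ^ 2 + qq T ^ 2 * T / \<tau>)"

lemma c1_pos: "c1 T > 0" using c0 by (simp add: c1_def)
lemma pb_nonneg: "pb T \<ge> 0" using c1_pos[of T] by (simp add: pb_def)
lemma al_nonneg: "al T \<ge> 0" using pb_nonneg[of T] by (simp add: al_def)

definition sol_on :: "real \<Rightarrow> (real \<Rightarrow> (real^'n^'k) \<times> (real^'k^'k)) \<Rightarrow> bool" where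
  "sol_on T x \<longleftrightarrow> x 0 = (W0, M0) \<and> (\<forall>t\<in>{0..T}. sym_posdef (snd (x t)) \<and>
      (x has_vector_derivative Fld \<tau> A (x t)) (at t within {0..T}))"

lemma vd_sub: "(x has_vector_derivative D) (at t within {0..S}) \<Longrightarrow> S' \<le> S \<Longrightarrow>
    (x has_vector_derivative D) (at t within {0..S'})"
  by (erule has_vector_derivative_within_subset) auto

lemma sol_on_sub: "sol_on S x \<Longrightarrow> S' \<le> S \<Longrightarrow> sol_on S' x"
  unfolding sol_on_def by (auto intro: vd_sub)

lemma pdc_of_spd: "sym_posdef M \<Longrightarrow> transpose (matrix_inv M) = matrix_inv M"
  using sym_posdef_pdc pdc_inv_sym by metis

lemma apriori_a:
  assumes sol: "sol_on S x" and ST: "S \<le> T" and t: "t \<in> {0..S}"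
  shows "pdc (c1 T) (snd (x t))"
proof -
  have der: "(x has_vector_derivative Fld \<tau> A (x s)) (at s within {0..t})" if "s \<in> {0..t}" for s
    using sol that t unfolding sol_on_def by (auto intro: vd_sub)
  have spd: "sym_posdef (snd (x s))" if "s \<in> {0..t}" for s
    using sol that t unfolding sol_on_def by auto
  have x0: "x 0 = (W0, M0)" using sol unfolding sol_on_def by auto
  have "c1 T * norm v ^ 2 \<le> inner v (snd (x t) *v v)" for v
  proof -
    define g where "g u = inner v (snd (x u) *v v)" for u
    define Q where "Q u = matrix_inv (snd (x u)) ** fst (x u) ** A ** transpose (fst (x u)) ** matrix_inv (snd (x u))" for u
    define g' where "g' u = (1/\<tau>) * (inner v (Q u *v v) - g u)" for u
    have gd: "(g has_real_derivative g' u) (at u within {0..t})" if "u \<in> {0..t}" for u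
    proof -
      have "(g has_real_derivative inner v (snd (Fld \<tau> A (x u)) *v v)) (at u within {0..t})"
        unfolding g_def by (rule vd_quad[OF vd_snd[OF der[OF that]]])
      moreover have "inner v (snd (Fld \<tau> A (x u)) *v v) = g' u"
        by (simp add: Fld_def g'_def g_def Q_def scaleR_matrix_vector_assoc[symmetric]
              matrix_vector_mult_diff_rdistrib inner_diff_right)
      ultimately show ?thesis by simp
    qed
    define h where "h u = - (exp (u / \<tau>) * g u)" for u
    have hd: "(h has_real_derivative - (exp (u / \<tau>) * (1/\<tau>) * g u + g' u * exp (u / \<tau>))) (at u within {0..t})"
      if "u \<in> {0..t}" for u
      unfolding h_def
      by (intro DERIV_minus DERIV_mult gd[OF that]) (use tau in \<open>auto intro!: derivative_eq_intros\<close>)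
    have "- (exp (u / \<tau>) * (1/\<tau>) * g u + g' u * exp (u / \<tau>)) \<le> 0" if "u \<in> {0..t}" for u
    proof -
      have "0 \<le> inner v (Q u *v v)"
        unfolding Q_def by (rule Q_nonneg[OF pdc_of_spd[OF spd[OF that]] A])
      hence "exp (u / \<tau>) * (1/\<tau>) * g u + g' u * exp (u / \<tau>) = exp (u / \<tau>) * ((1/\<tau>) * inner v (Q u *v v))"
        by (simp add: g'_def algebra_simps)
      moreover have "0 \<le> exp (u / \<tau>) * ((1/\<tau>) * inner v (Q u *v v))"
        using \<open>0 \<le> inner v (Q u *v v)\<close> tau by simp
      ultimately show ?thesis by linarith
    qed
    hence "h t \<le> h 0"
      using t by (intro mono_le[OF _ hd]) auto
    hence "g 0 \<le> exp (t / \<tau>) * g t" by (simp add: h_def)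
    moreover have "c0 * norm v ^ 2 \<le> g 0" using c0(2) x0 unfolding g_def pdc_def by simp
    ultimately have "c0 * norm v ^ 2 \<le> exp (t / \<tau>) * g t" by linarith
    hence "exp (- t / \<tau>) * (c0 * norm v ^ 2) \<le> g t"
      by (simp add: exp_minus field_simps)
    moreover have "exp (- T / \<tau>) \<le> exp (- t / \<tau>)"
      using t ST tau by (simp add: divide_right_mono)
    hence "exp (- T / \<tau>) * (c0 * norm v ^ 2) \<le> exp (- t / \<tau>) * (c0 * norm v ^ 2)"
      using c0(1) by (intro mult_right_mono) auto
    ultimately show ?thesis
      unfolding c1_def g_def by (simp add: mult.assoc)
  qed
  moreover have "transpose (snd (x t)) = snd (x t)" using spd[of t] t unfolding sym_posdef_def by auto
  ultimately show ?thesis unfolding pdc_def by auto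
qed

lemma P_bound:
  assumes sol: "sol_on S x" and ST: "S \<le> T" and t: "t \<in> {0..S}"
  shows "norm (matrix_inv (snd (x t))) \<le> pb T"
  using pdc_inv_norm[OF c1_pos apriori_a[OF assms]] by (simp add: pb_def)

lemma apriori_b:
  assumes sol: "sol_on S x" and ST: "S \<le> T" and t: "t \<in> {0..S}"
  shows "norm (fst (x t)) \<le> bW T"
proof -
  have der: "(x has_vector_derivative Fld \<tau> A (x s)) (at s within {0..t})" if "s \<in> {0..t}" for s
    using sol that t unfolding sol_on_def by (auto intro: vd_sub)
  have x0: "x 0 = (W0, M0)" using sol unfolding sol_on_def by auto
  define a where "a = al T"
  define f where "f u = norm (fst (x u)) ^ 2" for u
  define f' where "f' u = 2 * inner (fst (x u)) (fst (Fld \<tau> A (x u)))" for u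
  have fd: "(f has_real_derivative f' u) (at u within {0..t})" if "u \<in> {0..t}" for u
    unfolding f_def f'_def by (rule vd_normsq[OF vd_fst[OF der[OF that]]])
  have f'le: "f' u \<le> a * f u" if u: "u \<in> {0..t}" for u
  proof -
    let ?W = "fst (x u)" and ?P = "matrix_inv (snd (x u))"
    have uS: "u \<in> {0..S}" using u t by auto
    have "inner ?W (?P ** ?W ** A) \<le> norm ?W * norm (?P ** ?W ** A)" by (rule norm_cauchy_schwarz)
    also have "norm (?P ** ?W ** A) \<le> pb T * norm ?W * norm A"
    proof -
      have "norm (?P ** ?W ** A) \<le> norm (?P ** ?W) * norm A" by (rule norm_mm)
      also have "\<dots> \<le> (norm ?P * norm ?W) * norm A" by (intro mult_right_mono norm_mm) auto
      also have "\<dots> \<le> (pb T * norm ?W) * norm A"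
        using P_bound[OF sol ST uS] by (intro mult_right_mono) auto
      finally show ?thesis .
    qed
    hence "norm ?W * norm (?P ** ?W ** A) \<le> norm ?W * (pb T * norm ?W * norm A)"
      by (intro mult_left_mono) auto
    finally have i: "inner ?W (?P ** ?W ** A) \<le> pb T * norm A * norm ?W ^ 2"
      by (simp add: power2_eq_square ac_simps)
    have "f' u = 4 * (inner ?W (?P ** ?W ** A) - norm ?W ^ 2)"
      by (simp add: f'_def Fld_def inner_diff_right power2_norm_eq_inner)
    also have "\<dots> \<le> 4 * (pb T * norm A * norm ?W ^ 2)" using i zero_le_power2[of "norm ?W"] by (intro mult_left_mono) linarith+
    also have "\<dots> = a * f u" by (simp add: a_def al_def f_def)
    finally show ?thesis .
  qed
  define h where "h u = exp (- a * u) * f u" for u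
  have hd: "(h has_real_derivative (exp (- a * u) * (- a) * f u + f' u * exp (- a * u))) (at u within {0..t})"
    if "u \<in> {0..t}" for u
    unfolding h_def by (intro DERIV_mult fd[OF that]) (auto intro!: derivative_eq_intros)
  have "exp (- a * u) * (- a) * f u + f' u * exp (- a * u) \<le> 0" if "u \<in> {0..t}" for u
  proof -
    have "exp (- a * u) * (- a) * f u + f' u * exp (- a * u) = exp (- a * u) * (f' u - a * f u)"
      by (simp add: algebra_simps)
    also have "\<dots> \<le> 0" using f'le[OF that] by (simp add: mult_nonneg_nonpos)
    finally show ?thesis .
  qed
  hence "h t \<le> h 0" using t by (intro mono_le[OF _ hd]) auto
  hence "exp (- a * t) * f t \<le> norm W0 ^ 2" by (simp add: h_def f_def x0)
  hence "f t \<le> exp (a * t) * norm W0 ^ 2" by (simp add: exp_minus field_simps)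
  also have "\<dots> \<le> exp (a * T) * norm W0 ^ 2"
    using t ST al_nonneg[of T] by (intro mult_right_mono) (auto simp: a_def intro: mult_left_mono)
  finally have "norm (fst (x t)) ^ 2 \<le> exp (a * T) * norm W0 ^ 2" by (simp add: f_def)
  hence "norm (fst (x t)) \<le> sqrt (exp (a * T) * norm W0 ^ 2)" by (rule real_le_rsqrt)
  thus ?thesis by (simp add: bW_def a_def real_sqrt_mult)
qed

lemma Q_bound:
  assumes sol: "sol_on S x" and ST: "S \<le> T" and t: "t \<in> {0..S}"
  shows "norm (matrix_inv (snd (x t)) ** fst (x t) ** A ** transpose (fst (x t)) ** matrix_inv (snd (x t))) \<le> qq T"
proof -
  let ?W = "fst (x t)" and ?P = "matrix_inv (snd (x t))"
  have P: "norm ?P \<le> pb T" by (rule P_bound[OF assms])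
  have W: "norm ?W \<le> bW T" by (rule apriori_b[OF assms])
  have "norm (?P ** ?W ** A ** transpose ?W ** ?P) \<le> norm ?P * norm ?W * norm A * norm ?W * norm ?P"
  proof -
    have a: "norm (?P ** ?W ** A ** transpose ?W ** ?P) \<le> norm (?P ** ?W ** A ** transpose ?W) * norm ?P" by (rule norm_mm)
    have b: "norm (?P ** ?W ** A ** transpose ?W) \<le> norm (?P ** ?W ** A) * norm ?W" using norm_mm norm_transpose by metis
    have c: "norm (?P ** ?W ** A) \<le> norm (?P ** ?W) * norm A" by (rule norm_mm)
    have d: "norm (?P ** ?W) \<le> norm ?P * norm ?W" by (rule norm_mm)
    have "norm (?P ** ?W ** A) \<le> norm ?P * norm ?W * norm A"
      using c d by (meson mult_right_mono norm_ge_zero order_trans)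
    hence "norm (?P ** ?W ** A ** transpose ?W) \<le> norm ?P * norm ?W * norm A * norm ?W"
      using b by (meson mult_right_mono norm_ge_zero order_trans)
    thus ?thesis
      using a by (meson mult_right_mono norm_ge_zero order_trans)
  qed
  also have "\<dots> \<le> pb T * bW T * norm A * bW T * pb T"
    using P W pb_nonneg[of T] order_trans[OF norm_ge_zero W] by (intro mult_mono) auto
  also have "\<dots> = qq T" by (simp add: qq_def power2_eq_square ac_simps)
  finally show ?thesis .
qed

lemma apriori_c:
  assumes sol: "sol_on S x" and ST: "S \<le> T" and t: "t \<in> {0..S}"
  shows "norm (snd (x t)) \<le> bM T"
proof -
  have der: "(x has_vector_derivative Fld \<tau> A (x s)) (at s within {0..t})" if "s \<in> {0..t}" for s
    using sol that t unfolding sol_on_def by (auto intro: vd_sub)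
  have x0: "x 0 = (W0, M0)" using sol unfolding sol_on_def by auto
  define q where "q = qq T"
  define f where "f u = norm (snd (x u)) ^ 2" for u
  define f' where "f' u = 2 * inner (snd (x u)) (snd (Fld \<tau> A (x u)))" for u
  have fd: "(f has_real_derivative f' u) (at u within {0..t})" if "u \<in> {0..t}" for u
    unfolding f_def f'_def by (rule vd_normsq[OF vd_snd[OF der[OF that]]])
  have f'le: "f' u \<le> q^2 / \<tau>" if u: "u \<in> {0..t}" for u
  proof -
    let ?M = "snd (x u)" and ?Q = "matrix_inv (snd (x u)) ** fst (x u) ** A ** transpose (fst (x u)) ** matrix_inv (snd (x u))"
    have uS: "u \<in> {0..S}" using u t by auto
    have Qb: "norm ?Q \<le> q" unfolding q_def by (rule Q_bound[OF sol ST uS])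
    have "inner ?M ?Q \<le> norm ?M * norm ?Q" by (rule norm_cauchy_schwarz)
    also have "\<dots> \<le> norm ?M * q" using Qb by (intro mult_left_mono) auto
    also have "\<dots> \<le> (norm ?M ^ 2 + q ^ 2) / 2"
      using sum_squares_bound[of "norm ?M" q] by (simp add: power2_eq_square field_simps)
    finally have i: "inner ?M ?Q \<le> (norm ?M ^ 2 + q ^ 2) / 2" .
    have "f' u = (2 / \<tau>) * (inner ?M ?Q - norm ?M ^ 2)"
      by (simp add: f'_def Fld_def inner_diff_right power2_norm_eq_inner)
    also have "\<dots> \<le> (2 / \<tau>) * ((norm ?M ^ 2 + q ^ 2) / 2 - norm ?M ^ 2)"
      using i tau by (intro mult_left_mono) auto
    also have "\<dots> = (q ^ 2 - norm ?M ^ 2) / \<tau>" using tau by (simp add: field_simps)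
    also have "\<dots> \<le> q ^ 2 / \<tau>" using tau by (intro divide_right_mono) auto
    finally show ?thesis .
  qed
  define h where "h u = f u - q ^ 2 / \<tau> * u" for u
  have hd: "(h has_real_derivative (f' u - q ^ 2 / \<tau>)) (at u within {0..t})"
    if "u \<in> {0..t}" for u
    unfolding h_def by (intro DERIV_diff fd[OF that]) (use tau in \<open>auto intro!: derivative_eq_intros\<close>)
  have "h t \<le> h 0" using t f'le by (intro mono_le[OF _ hd]) auto
  hence "f t \<le> norm M0 ^ 2 + q ^ 2 / \<tau> * t" by (simp add: h_def f_def x0)
  also have "\<dots> \<le> norm M0 ^ 2 + q ^ 2 * T / \<tau>"
    using t ST tau by (simp add: divide_right_mono mult_left_mono)
  finally have "norm (snd (x t)) ^ 2 \<le> norm M0 ^ 2 + q ^ 2 * T / \<tau>" by (simp add: f_def)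
  hence "norm (snd (x t)) \<le> sqrt (norm M0 ^ 2 + q ^ 2 * T / \<tau>)" by (rule real_le_rsqrt)
  thus ?thesis by (simp add: bM_def q_def)
qed

end

definition Reg :: "real \<Rightarrow> real \<Rightarrow> real \<Rightarrow> ((real^'n^'k) \<times> (real^'k^'k)) set" where
  "Reg c bw bm = {x. pdc c (snd x) \<and> norm (fst x) \<le> bw \<and> norm (snd x) \<le> bm}"

lemma Reg_convex: "convex (Reg c bw bm)"
  unfolding convex_def
proof (intro ballI allI impI)
  fix x y :: "(real^'n^'k) \<times> (real^'k^'k)" and u v :: real
  assume x: "x \<in> Reg c bw bm" and y: "y \<in> Reg c bw bm" and uv: "0 \<le> u" "0 \<le> v" "u + v = 1"
  have "transpose (snd (u *\<^sub>R x + v *\<^sub>R y)) = snd (u *\<^sub>R x + v *\<^sub>R y)"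
    using x y by (simp add: Reg_def pdc_def transpose_add transpose_scalar)
  moreover have "c * norm w ^ 2 \<le> inner w (snd (u *\<^sub>R x + v *\<^sub>R y) *v w)" for w
  proof -
    have "inner w (snd (u *\<^sub>R x + v *\<^sub>R y) *v w) = u * inner w (snd x *v w) + v * inner w (snd y *v w)"
      by (simp add: matrix_vector_mult_add_rdistrib inner_add_right scaleR_matrix_vector_assoc[symmetric])
    also have "\<dots> \<ge> u * (c * norm w ^ 2) + v * (c * norm w ^ 2)"
      using x y uv by (intro add_mono mult_left_mono) (auto simp: Reg_def pdc_def)
    also have "u * (c * norm w ^ 2) + v * (c * norm w ^ 2) = c * norm w ^ 2"
      by (simp only: distrib_right[symmetric] uv(3) mult_1)
    finally show ?thesis .
  qed
  moreover have "norm (fst (u *\<^sub>R x + v *\<^sub>R y)) \<le> bw"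
  proof -
    have "norm (fst (u *\<^sub>R x + v *\<^sub>R y)) \<le> u * norm (fst x) + v * norm (fst y)"
      using uv norm_triangle_ineq[of "u *\<^sub>R fst x" "v *\<^sub>R fst y"] by simp
    also have "\<dots> \<le> u * bw + v * bw" using x y uv by (intro add_mono mult_left_mono) (auto simp: Reg_def)
    also have "u * bw + v * bw = bw" by (simp only: distrib_right[symmetric] uv(3) mult_1)
    finally show ?thesis .
  qed
  moreover have "norm (snd (u *\<^sub>R x + v *\<^sub>R y)) \<le> bm"
  proof -
    have "norm (snd (u *\<^sub>R x + v *\<^sub>R y)) \<le> u * norm (snd x) + v * norm (snd y)"
      using uv norm_triangle_ineq[of "u *\<^sub>R snd x" "v *\<^sub>R snd y"] by simp
    also have "\<dots> \<le> u * bm + v * bm" using x y uv by (intro add_mono mult_left_mono) (auto simp: Reg_def)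
    also have "u * bm + v * bm = bm" by (simp only: distrib_right[symmetric] uv(3) mult_1)
    finally show ?thesis .
  qed
  ultimately show "u *\<^sub>R x + v *\<^sub>R y \<in> Reg c bw bm" by (simp add: Reg_def pdc_def)
qed

lemma Reg_closed: "closed (Reg c bw bm)"
proof -
  have ct: "continuous_on UNIV (\<lambda>x::(real^'n^'k) \<times> (real^'k^'k). transpose (snd x))"
    by (rule linear_continuous_on[OF bounded_linear_compose[OF bl_transpose bounded_linear_snd]])
  have cq: "continuous_on UNIV (\<lambda>x::(real^'n^'k) \<times> (real^'k^'k). inner w (snd x *v w))" for w
    by (rule linear_continuous_on[OF bounded_linear_compose[OF bl_quad bounded_linear_snd]])
  have "Reg c bw bm = {x. transpose (snd x) = snd x \<and> (\<forall>w. c * norm w ^ 2 \<le> inner w (snd x *v w))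
      \<and> norm (fst x) \<le> bw \<and> norm (snd x) \<le> bm}"
    by (simp add: Reg_def pdc_def)
  also have "closed \<dots>"
    by (intro closed_Collect_conj closed_Collect_all closed_Collect_eq closed_Collect_le ct cq
        continuous_intros)
  finally show ?thesis .
qed

lemma fld_sym:
  assumes "c > 0" "pdc c (snd x)" "transpose A = A"
  shows "transpose (snd (Fld \<tau> A x)) = snd (Fld \<tau> A x)"
  using assms pdc_inv_sym[OF assms(1,2)] Q_sym[OF pdc_inv_sym[OF assms(1,2)] assms(3)]
  by (simp add: Fld_def transpose_scalar transpose_diff pdc_def)

lemma diff_diff_swap_helper: "(a - b) - (c - e) = (a - c) - (b - (e::'a::ab_group_add))"
  by (simp add: algebra_simps)

lemma fld_lip:
  fixes A :: "real^'n^'n"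
  assumes c: "c > 0"
  shows "\<exists>L\<ge>0. \<forall>x\<in>Reg c bw bm. \<forall>y\<in>Reg c bw bm.
     norm (Fld \<tau> A x - Fld \<tau> A y) \<le> L * norm (x - (y::(real^'n^'k) \<times> (real^'k^'k)))"
proof -
  define p where "p = sqrt (real CARD('k)) / c"
  define a where "a = norm A"
  define eP where "eP = p * p"
  define e1 where "e1 = eP * bw + p * 1"
  define b1 where "b1 = p * bw"
  define e2 where "e2 = e1 * a + b1 * 0"
  define b2 where "b2 = b1 * a"
  define e3 where "e3 = e2 * bw + b2 * 1"
  define b3 where "b3 = b2 * bw"
  define e4 where "e4 = e3 * p + b3 * eP"
  define L where "L = 2 * (e2 + 1) + \<bar>1/\<tau>\<bar> * (e4 + 1)"
  have main: "norm (Fld \<tau> A x - Fld \<tau> A y) \<le> L * norm (x - y)"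
    if x: "x \<in> Reg c bw bm" and y: "y \<in> Reg c bw bm" for x y :: "(real^'n^'k) \<times> (real^'k^'k)"
  proof -
    obtain W1 M1 where x1: "x = (W1, M1)" by fastforce
    obtain W2 M2 where y2: "y = (W2, M2)" by fastforce
    define d where "d = norm (x - y)"
    define P1 where "P1 = matrix_inv M1"
    define P2 where "P2 = matrix_inv M2"
    have pd1: "pdc c M1" and pd2: "pdc c M2" and nW1: "norm W1 \<le> bw" and nW2: "norm W2 \<le> bw"
      using x y by (auto simp: Reg_def x1 y2)
    have dW: "norm (W1 - W2) \<le> 1 * d"
      using norm_fst_le[of "W1 - W2" "M1 - M2"] by (simp add: d_def x1 y2)
    have dM: "norm (M1 - M2) \<le> d"
      using norm_snd_le[of "M1 - M2" "W1 - W2"] by (simp add: d_def x1 y2)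
    have nP1: "norm P1 \<le> p" unfolding P1_def p_def by (rule pdc_inv_norm[OF c pd1])
    have nP2: "norm P2 \<le> p" unfolding P2_def p_def by (rule pdc_inv_norm[OF c pd2])
    have p0: "0 \<le> p" using nP1 norm_ge_zero[of P1] by linarith
    have "P1 ** (M2 - M1) ** P2 = P1 ** (M2 ** P2) - (P1 ** M1) ** P2"
      by (simp add: matrix_diff_ldistrib matrix_diff_rdistrib matrix_mul_assoc)
    also have "\<dots> = P1 - P2"
      using pdc_inv[OF c pd1] pdc_inv[OF c pd2] by (simp add: P1_def P2_def)
    finally have Pd: "P1 - P2 = P1 ** (M2 - M1) ** P2" by simp
    have "norm (P1 - P2) \<le> norm (P1 ** (M2 - M1)) * norm P2" unfolding Pd by (rule norm_mm)
    also have "\<dots> \<le> (norm P1 * norm (M2 - M1)) * norm P2" by (intro mult_right_mono norm_mm) auto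
    also have "\<dots> \<le> (p * d) * p"
      using nP1 nP2 dM p0 order_trans[OF norm_ge_zero dM] by (intro mult_mono) (auto simp: norm_minus_commute)
    finally have dP: "norm (P1 - P2) \<le> eP * d" by (simp add: eP_def ac_simps)
    note PW = prod_lip[OF nP1 nP2 dP nW1 nW2 dW]
    have dA: "norm (A - A) \<le> 0 * d" by simp
    have nA: "norm A \<le> a" by (simp add: a_def)
    note PWA = prod_lip[OF PW(2,3) PW(1)[folded e1_def] nA nA dA]
    have nWt1: "norm (transpose W1) \<le> bw" and nWt2: "norm (transpose W2) \<le> bw"
      using nW1 nW2 by (simp_all add: norm_transpose)
    have dWt: "norm (transpose W1 - transpose W2) \<le> 1 * d"
      using dW by (simp add: transpose_diff[symmetric] norm_transpose)
    note PWAW = prod_lip[OF PWA(2,3)[folded b1_def] PWA(1)[folded e1_def b1_def e2_def] nWt1 nWt2 dWt]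
    note Q = prod_lip[OF PWAW(2,3)[folded b1_def b2_def] PWAW(1)[folded e1_def b1_def e2_def b2_def e3_def] nP1 nP2 dP]
    have e2: "norm ((P1 ** W1 ** A - W1) - (P2 ** W2 ** A - W2)) \<le> e2 * d + d"
    proof -
      have "norm ((P1 ** W1 ** A - W1) - (P2 ** W2 ** A - W2)) \<le> norm (P1 ** W1 ** A - P2 ** W2 ** A) + norm (W1 - W2)"
        by (subst diff_diff_swap_helper) (rule norm_triangle_ineq4)
      thus ?thesis using PWA(1) dW unfolding e1_def e2_def b1_def by simp
    qed
    have e4: "norm ((P1 ** W1 ** A ** transpose W1 ** P1 - M1) - (P2 ** W2 ** A ** transpose W2 ** P2 - M2)) \<le> e4 * d + d"
    proof -
      have "norm ((P1 ** W1 ** A ** transpose W1 ** P1 - M1) - (P2 ** W2 ** A ** transpose W2 ** P2 - M2))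
          \<le> norm (P1 ** W1 ** A ** transpose W1 ** P1 - P2 ** W2 ** A ** transpose W2 ** P2) + norm (M1 - M2)"
        by (subst diff_diff_swap_helper) (rule norm_triangle_ineq4)
      thus ?thesis using Q(1) dM unfolding e1_def e2_def e3_def e4_def b1_def b2_def b3_def by simp
    qed
    have "Fld \<tau> A x - Fld \<tau> A y = (2 *\<^sub>R ((P1 ** W1 ** A - W1) - (P2 ** W2 ** A - W2)),
        (1/\<tau>) *\<^sub>R ((P1 ** W1 ** A ** transpose W1 ** P1 - M1) - (P2 ** W2 ** A ** transpose W2 ** P2 - M2)))"
      by (simp add: Fld_def x1 y2 P1_def P2_def scaleR_diff_right)
    hence "norm (Fld \<tau> A x - Fld \<tau> A y) \<le> 2 * norm ((P1 ** W1 ** A - W1) - (P2 ** W2 ** A - W2))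
       + \<bar>1/\<tau>\<bar> * norm ((P1 ** W1 ** A ** transpose W1 ** P1 - M1) - (P2 ** W2 ** A ** transpose W2 ** P2 - M2))"
    proof -
      note eq = \<open>Fld \<tau> A x - Fld \<tau> A y = _\<close>
      show ?thesis unfolding eq
        by (rule order_trans[OF norm_Pair_le]) simp
    qed
    also have "\<dots> \<le> 2 * (e2 * d + d) + \<bar>1/\<tau>\<bar> * (e4 * d + d)"
      using e2 e4 by (intro add_mono mult_left_mono) auto
    also have "\<dots> = L * d" by (simp add: L_def algebra_simps add_divide_distrib)
    finally show ?thesis by (simp add: d_def)
  qed
  show ?thesis
  proof (intro exI[of _ "max L 0"] conjI ballI)
    fix x y :: "(real^'n^'k) \<times> (real^'k^'k)" assume "x \<in> Reg c bw bm" "y \<in> Reg c bw bm"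
    hence "norm (Fld \<tau> A x - Fld \<tau> A y) \<le> L * norm (x - y)" by (rule main)
    also have "\<dots> \<le> max L 0 * norm (x - y)" by (intro mult_right_mono) auto
    finally show "norm (Fld \<tau> A x - Fld \<tau> A y) \<le> max L 0 * norm (x - y)" .
  qed auto
qed

lemma pdc_mono: "c' \<le> c \<Longrightarrow> pdc c M \<Longrightarrow> pdc c' M"
  unfolding pdc_def by (meson mult_right_mono order_trans zero_le_power2)

context sys
begin

definition RT :: "real \<Rightarrow> ((real^'n^'k) \<times> (real^'k^'k)) set" where "RT T = Reg (c1 T / 2) (bW T + 1) (bM T + 1)"

lemma in_RT:
  assumes "sol_on S x" "S \<le> T" "t \<in> {0..S}"
  shows "x t \<in> RT T"
proof -
  have "pdc (c1 T / 2) (snd (x t))" using pdc_mono[OF _ apriori_a[OF assms]] c1_pos[of T] by simp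
  thus ?thesis using apriori_b[OF assms] apriori_c[OF assms] by (simp add: RT_def Reg_def)
qed

lemma unique:
  assumes x: "sol_on T x" and y: "sol_on T y" and t: "t \<in> {0..T}"
  shows "x t = y t"
proof -
  obtain L where L: "L \<ge> 0" "\<And>a b. a \<in> RT T \<Longrightarrow> b \<in> RT T \<Longrightarrow> norm (Fld \<tau> A a - Fld \<tau> A b) \<le> L * norm (a - b)"
    using fld_lip[of "c1 T / 2" "bW T + 1" "bM T + 1" \<tau> A] c1_pos[of T] unfolding RT_def by auto
  have xin: "x s \<in> RT T" "y s \<in> RT T" if "s \<in> {0..T}" for s
    using in_RT[OF x order.refl that] in_RT[OF y order.refl that] by auto
  define d where "d s = norm (x s - y s) ^ 2" for s
  define d' where "d' s = 2 * inner (x s - y s) (Fld \<tau> A (x s) - Fld \<tau> A (y s))" for s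
  have dd: "(d has_real_derivative d' s) (at s within {0..t})" if s: "s \<in> {0..t}" for s
  proof -
    have sT: "s \<in> {0..T}" using s t by auto
    have "(x has_vector_derivative Fld \<tau> A (x s)) (at s within {0..t})"
      using x sT t unfolding sol_on_def by (auto intro: vd_sub)
    moreover have "(y has_vector_derivative Fld \<tau> A (y s)) (at s within {0..t})"
      using y sT t unfolding sol_on_def by (auto intro: vd_sub)
    ultimately have "((\<lambda>s. x s - y s) has_vector_derivative Fld \<tau> A (x s) - Fld \<tau> A (y s)) (at s within {0..t})"
      by (rule has_vector_derivative_diff)
    thus ?thesis unfolding d_def d'_def by (rule vd_normsq)
  qed
  have d'le: "d' s \<le> 2 * L * d s" if s: "s \<in> {0..t}" for s
  proof -
    have sT: "s \<in> {0..T}" using s t by auto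
    have "inner (x s - y s) (Fld \<tau> A (x s) - Fld \<tau> A (y s)) \<le> norm (x s - y s) * norm (Fld \<tau> A (x s) - Fld \<tau> A (y s))"
      by (rule norm_cauchy_schwarz)
    also have "\<dots> \<le> norm (x s - y s) * (L * norm (x s - y s))"
      using L(2)[OF xin(1)[OF sT] xin(2)[OF sT]] by (intro mult_left_mono) auto
    finally show ?thesis by (simp add: d'_def d_def power2_eq_square ac_simps)
  qed
  define h where "h s = exp (- 2 * L * s) * d s" for s
  have hd: "(h has_real_derivative (exp (- 2 * L * s) * (- 2 * L) * d s + d' s * exp (- 2 * L * s))) (at s within {0..t})"
    if "s \<in> {0..t}" for s
    unfolding h_def by (intro DERIV_mult dd[OF that]) (auto intro!: derivative_eq_intros)
  have "exp (- 2 * L * s) * (- 2 * L) * d s + d' s * exp (- 2 * L * s) \<le> 0" if "s \<in> {0..t}" for s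
  proof -
    have "exp (- 2 * L * s) * (- 2 * L) * d s + d' s * exp (- 2 * L * s) = exp (- 2 * L * s) * (d' s - 2 * L * d s)"
      by (simp add: algebra_simps)
    also have "\<dots> \<le> 0" using d'le[OF that] by (simp add: mult_nonneg_nonpos)
    finally show ?thesis .
  qed
  hence "h t \<le> h 0" using t by (intro mono_le[OF _ hd]) auto
  moreover have "x 0 = y 0" using x y unfolding sol_on_def by auto
  ultimately have "exp (- 2 * L * t) * d t \<le> 0" by (simp add: h_def d_def)
  hence "d t \<le> 0" by (simp add: mult_le_0_iff)
  thus ?thesis by (simp add: d_def)
qed

lemma x0_RT: "(W0, M0) \<in> RT T" if "T \<ge> 0"
proof -
  have "c1 T \<le> c0" using c0(1) tau that by (simp add: c1_def mult_le_cancel_right1)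
  hence "pdc (c1 T / 2) M0" using c0 c1_pos[of T] by (intro pdc_mono[OF _ c0(2)]) auto
  moreover have "norm W0 \<le> bW T"
  proof -
    have "1 \<le> exp (al T * T)" using al_nonneg[of T] that by simp
    hence "1 \<le> sqrt (exp (al T * T))" by simp
    thus ?thesis unfolding bW_def by (metis mult_le_cancel_right1 norm_ge_zero order.trans mult.commute mult_right_mono mult_1)
  qed
  moreover have "norm M0 \<le> bM T"
  proof -
    have "0 \<le> qq T ^ 2 * T / \<tau>" using tau that by simp
    hence "norm M0 ^ 2 \<le> norm M0 ^ 2 + qq T ^ 2 * T / \<tau>" by simp
    thus ?thesis unfolding bM_def by (rule real_le_rsqrt)
  qed
  ultimately show ?thesis by (simp add: RT_def Reg_def)
qed

lemma exists:
  assumes T: "T \<ge> 0"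
  shows "\<exists>x. sol_on T x"
proof -
  define R where "R = RT T"
  have Rc: "convex R" "closed R" unfolding R_def RT_def by (rule Reg_convex, rule Reg_closed)
  have x0R: "(W0, M0) \<in> R" unfolding R_def by (rule x0_RT[OF T])
  hence Rne: "R \<noteq> {}" by auto
  obtain L where L: "L \<ge> 0" "\<And>a b. a \<in> R \<Longrightarrow> b \<in> R \<Longrightarrow> norm (Fld \<tau> A a - Fld \<tau> A b) \<le> L * norm (a - b)"
    using fld_lip[of "c1 T / 2" "bW T + 1" "bM T + 1" \<tau> A] c1_pos[of T] unfolding R_def RT_def by auto
  define cp where "cp = closest_point R"
  have cpR: "cp z \<in> R" for z unfolding cp_def by (rule closest_point_in_set[OF Rc(2) Rne])
  have cpid: "z \<in> R \<Longrightarrow> cp z = z" for z unfolding cp_def by (rule closest_point_self)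
  have cpl: "norm (cp a - cp b) \<le> norm (a - b)" for a b
    using closest_point_lipschitz[OF Rc Rne, of a b] by (simp add: cp_def dist_norm)
  define G where "G z = Fld \<tau> A (cp z)" for z
  have Glip: "norm (G a - G b) \<le> L * norm (a - b)" for a b
  proof -
    have "norm (G a - G b) \<le> L * norm (cp a - cp b)" unfolding G_def by (rule L(2)[OF cpR cpR])
    also have "\<dots> \<le> L * norm (a - b)" by (intro mult_left_mono cpl L(1))
    finally show ?thesis .
  qed
  define B where "B = norm (Fld \<tau> A (W0, M0)) + L * ((bW T + 1) + (bM T + 1) + norm (W0, M0))"
  have Gb: "norm (G z) \<le> B" for z
  proof -
    have nR: "norm (cp z) \<le> (bW T + 1) + (bM T + 1)"
    proof -
      have "norm (cp z) \<le> norm (fst (cp z)) + norm (snd (cp z))"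
        using norm_Pair_le[of "fst (cp z)" "snd (cp z)"] by simp
      also have "\<dots> \<le> (bW T + 1) + (bM T + 1)" using cpR[of z] by (auto simp: R_def RT_def Reg_def)
      finally show ?thesis .
    qed
    have "norm (G z) \<le> norm (Fld \<tau> A (W0, M0)) + norm (G z - Fld \<tau> A (W0, M0))"
      by (metis norm_triangle_sub add.commute)
    also have "norm (G z - Fld \<tau> A (W0, M0)) \<le> L * norm (cp z - (W0, M0))"
      unfolding G_def by (rule L(2)[OF cpR x0R])
    also have "\<dots> \<le> L * ((bW T + 1) + (bM T + 1) + norm (W0, M0))"
      using nR norm_triangle_ineq4[of "cp z" "(W0, M0)"] by (intro mult_left_mono L(1)) auto
    finally show ?thesis by (simp add: B_def)
  qed
  obtain f where f0: "f 0 = (W0, M0)" and fc: "continuous_on {0..T} f"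
    and fd: "\<And>t. t \<in> {0..T} \<Longrightarrow> (f has_vector_derivative G (f t)) (at t within {0..T})"
    using picard_global[OF Glip L(1) Gb T, of "(W0, M0)"] by auto
  have At: "transpose A = A" using A unfolding sym_posdef_def by auto
  have fsym: "transpose (snd (f t)) = snd (f t)" if t: "t \<in> {0..T}" for t
  proof -
    define \<phi> where "\<phi> s = transpose (snd (f s)) - snd (f s)" for s
    have "(\<phi> has_derivative (\<lambda>h. 0)) (at s within {0..T})" if s: "s \<in> {0..T}" for s
    proof -
      have sd: "((\<lambda>s. snd (f s)) has_vector_derivative snd (G (f s))) (at s within {0..T})"
        by (rule vd_snd[OF fd[OF s]])
      have "(\<phi> has_vector_derivative transpose (snd (G (f s))) - snd (G (f s))) (at s within {0..T})"
        unfolding \<phi>_def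
        by (intro has_vector_derivative_diff sd bounded_linear.has_vector_derivative[OF bl_transpose])
      moreover have "transpose (snd (G (f s))) = snd (G (f s))"
        unfolding G_def
        by (rule fld_sym[of "c1 T / 2" _ A \<tau>]) (use c1_pos[of T] cpR[of "f s"] At in \<open>auto simp: R_def RT_def Reg_def\<close>)
      ultimately show ?thesis by (simp add: has_vector_derivative_def)
    qed
    then obtain k where "\<forall>s\<in>{0..T}. \<phi> s = k"
      using has_derivative_zero_constant[of "{0..T}" \<phi>] by auto
    hence "\<phi> t = \<phi> 0" using t T by auto
    also have "\<phi> 0 = 0" using c0(2) by (simp add: \<phi>_def f0 pdc_def)
    finally show ?thesis by (simp add: \<phi>_def)
  qed
  define SS where "SS = {s. s \<in> {0..T} \<and> (\<forall>u\<in>{0..s}. f u \<in> R)}"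
  define s0 where "s0 = Sup SS"
  have SS0: "0 \<in> SS" using T x0R f0 by (auto simp: SS_def)
  have SSne: "SS \<noteq> {}" using SS0 by auto
  have SSbdd: "bdd_above SS" by (rule bdd_aboveI[of _ T]) (auto simp: SS_def)
  have s0: "0 \<le> s0" "s0 \<le> T"
    using cSup_upper[OF SS0 SSbdd] cSup_least[OF SSne, of T] by (auto simp: s0_def SS_def)
  have below: "f u \<in> R" if "u \<in> {0..<s0}" for u
  proof -
    have "u < Sup SS" using that by (simp add: s0_def)
    then obtain s where "s \<in> SS" "u < s" using less_cSupE[OF _ SSne] by blast
    thus ?thesis using that by (auto simp: SS_def)
  qed
  have upto: "f u \<in> R" if u: "u \<in> {0..s0}" for u
  proof (cases "s0 = 0")
    case True thus ?thesis using u x0R f0 by auto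
  next
    case False
    hence "closure {0..<s0} = {0..s0}" using s0 by simp
    moreover have "continuous_on {0..s0} f" by (rule continuous_on_subset[OF fc]) (use s0 in auto)
    moreover have "f ` {0..<s0} \<subseteq> R" using below by blast
    ultimately have "f ` {0..s0} \<subseteq> R"
      using image_closure_subset[of "{0..<s0}" f R] Rc(2) by metis
    thus ?thesis using u by auto
  qed
  have solS: "sol_on s0 f"
    unfolding sol_on_def
  proof (intro conjI ballI f0)
    fix t assume t: "t \<in> {0..s0}"
    have tR: "f t \<in> R" by (rule upto[OF t])
    thus "sym_posdef (snd (f t))"
      using c1_pos[of T] by (intro pdc_sym_posdef[of "c1 T / 2"]) (auto simp: R_def RT_def Reg_def)
    have "(f has_vector_derivative G (f t)) (at t within {0..s0})"
      using fd[of t] t s0 by (auto intro: vd_sub)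
    thus "(f has_vector_derivative Fld \<tau> A (f t)) (at t within {0..s0})"
      using cpid[OF tR] by (simp add: G_def)
  qed
  have "s0 = T"
  proof (rule ccontr)
    assume "s0 \<noteq> T"
    hence lt: "s0 < T" using s0 by auto
    have s0in: "s0 \<in> {0..s0}" using s0 by auto
    have pd: "pdc (c1 T) (snd (f s0))" by (rule apriori_a[OF solS s0(2) s0in])
    have bw: "norm (fst (f s0)) \<le> bW T" by (rule apriori_b[OF solS s0(2) s0in])
    have bm: "norm (snd (f s0)) \<le> bM T" by (rule apriori_c[OF solS s0(2) s0in])
    define e where "e = min 1 (c1 T / 2)"
    have e: "e > 0" using c1_pos[of T] by (simp add: e_def)
    obtain \<delta> where \<delta>: "\<delta> > 0" "\<And>u. u \<in> {0..T} \<Longrightarrow> dist u s0 < \<delta> \<Longrightarrow> dist (f u) (f s0) < e"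
      using fc e s0 unfolding continuous_on_iff by (metis atLeastAtMost_iff)
    define s' where "s' = min T (s0 + \<delta> / 2)"
    have s'gt: "s0 < s'" using lt \<delta> by (simp add: s'_def)
    have "s' \<in> SS"
    proof -
      have "f u \<in> R" if u: "u \<in> {0..s'}" for u
      proof (cases "u \<le> s0")
        case True thus ?thesis using upto u by auto
      next
        case False
        have uT: "u \<in> {0..T}" using u by (auto simp: s'_def)
        have "dist u s0 < \<delta>" using False u \<delta> by (auto simp: s'_def dist_real_def)
        hence close: "norm (f u - f s0) < e" using \<delta>(2)[OF uT] by (simp add: dist_norm)
        have eqp: "(fst (f u) - fst (f s0), snd (f u) - snd (f s0)) = f u - f s0"
          by (simp add: prod_eq_iff)
        have nf: "norm (fst (f u) - fst (f s0)) < e" "norm (snd (f u) - snd (f s0)) < e"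
          using close norm_fst_le[of "fst (f u) - fst (f s0)" "snd (f u) - snd (f s0)"]
            norm_snd_le[of "snd (f u) - snd (f s0)" "fst (f u) - fst (f s0)"]
          unfolding eqp by linarith+
        have "norm (fst (f u)) \<le> bW T + 1"
          using norm_triangle_ineq2[of "fst (f u)" "fst (f s0)"] nf(1) bw by (simp add: e_def)
        moreover have "norm (snd (f u)) \<le> bM T + 1"
          using norm_triangle_ineq2[of "snd (f u)" "snd (f s0)"] nf(2) bm by (simp add: e_def)
        moreover have "pdc (c1 T / 2) (snd (f u))"
          unfolding pdc_def
        proof (intro conjI allI)
          show "transpose (snd (f u)) = snd (f u)" by (rule fsym[OF uT])
          fix w :: "real^'k"
          have "inner w (snd (f u) *v w) = inner w (snd (f s0) *v w) + inner w ((snd (f u) - snd (f s0)) *v w)"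
            by (simp add: matrix_vector_mult_diff_rdistrib inner_diff_right)
          moreover have "c1 T * norm w ^ 2 \<le> inner w (snd (f s0) *v w)" using pd by (simp add: pdc_def)
          moreover have "- (c1 T / 2 * norm w ^ 2) \<le> inner w ((snd (f u) - snd (f s0)) *v w)"
          proof -
            have "\<bar>inner w ((snd (f u) - snd (f s0)) *v w)\<bar> \<le> norm (snd (f u) - snd (f s0)) * norm w ^ 2"
              by (rule quad_bound)
            also have "\<dots> \<le> c1 T / 2 * norm w ^ 2"
              using nf(2) by (intro mult_right_mono) (auto simp: e_def)
            finally show ?thesis by linarith
          qed
          ultimately show "c1 T / 2 * norm w ^ 2 \<le> inner w (snd (f u) *v w)" by linarith
        qed
        ultimately show ?thesis by (simp add: R_def RT_def Reg_def)
      qed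
      moreover have "s' \<in> {0..T}" using s0 s'gt by (auto simp: s'_def)
      ultimately show ?thesis by (auto simp: SS_def)
    qed
    hence "s' \<le> s0" unfolding s0_def by (rule cSup_upper[OF _ SSbdd])
    thus False using s'gt by simp
  qed
  thus ?thesis using solS by auto
qed

end

lemma lip_comp_cont:
  assumes "continuous_on S g" "g ` S \<subseteq> R" "\<And>a b. a \<in> R \<Longrightarrow> b \<in> R \<Longrightarrow> norm (F a - F b) \<le> L * norm (a - b)" "L \<ge> 0"
  shows "continuous_on S (\<lambda>s. F (g s))"
proof -
  have "L-lipschitz_on R F"
    by (rule lipschitz_onI) (use assms(3,4) in \<open>auto simp: dist_norm\<close>)
  hence "continuous_on R F" by (rule lipschitz_on_continuous_on)
  thus ?thesis using continuous_on_compose2 assms(1,2) by blast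
qed

lemma atw: "0 \<le> t \<Longrightarrow> t < K \<Longrightarrow> at t within {0..K} = at t within {0::real..}"
  by (rule at_within_nhd[of t "{..<K}"]) auto

context sys
begin

definition "XX N = (SOME x. sol_on (real N) x)" for N :: nat
definition "NN t = nat \<lceil>t\<rceil> + 1" for t :: real
definition "xs t = XX (NN t) t" for t

lemma XX: "sol_on (real N) (XX N)"
  unfolding XX_def by (rule someI_ex[OF exists]) simp

lemma NN: "t < real (NN t)"
  unfolding NN_def by linarith

lemma agree: "t \<in> {0..real K} \<Longrightarrow> xs t = XX K t"
proof -
  assume t: "t \<in> {0..real K}"
  define m where "m = min (real K) (real (NN t))"
  have tm: "t \<in> {0..m}" using t NN[of t] by (auto simp: m_def)
  show ?thesis unfolding xs_def
    by (rule unique[OF sol_on_sub[OF XX] sol_on_sub[OF XX] tm]) (auto simp: m_def)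
qed

lemma xs_sol: "sol_on (real K) xs"
  unfolding sol_on_def
proof (intro conjI ballI)
  show "xs 0 = (W0, M0)" using agree[of 0 0] XX[of 0] by (simp add: sol_on_def)
  fix t assume t: "t \<in> {0..real K}"
  have s: "sym_posdef (snd (XX K t)) \<and> (XX K has_vector_derivative Fld \<tau> A (XX K t)) (at t within {0..real K})"
    using XX[of K] t unfolding sol_on_def by auto
  thus "sym_posdef (snd (xs t))" using agree[OF t] by simp
  show "(xs has_vector_derivative Fld \<tau> A (xs t)) (at t within {0..real K})"
    unfolding agree[OF t]
    by (rule has_vector_derivative_transform[where g=xs and f="XX K", OF t]) (use agree s in auto)
qed

lemma xs_cont: "continuous_on {0..real K} (\<lambda>s. Fld \<tau> A (xs s))"
proof -
  have c: "continuous_on {0..real K} xs"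
    using xs_sol[of K] unfolding sol_on_def
    by (auto simp: continuous_on_eq_continuous_within intro: has_vector_derivative_continuous)
  have i: "xs ` {0..real K} \<subseteq> RT (real K)" using in_RT[OF xs_sol order.refl] by auto
  obtain L where L: "L \<ge> 0" "\<And>a b. a \<in> RT (real K) \<Longrightarrow> b \<in> RT (real K) \<Longrightarrow> norm (Fld \<tau> A a - Fld \<tau> A b) \<le> L * norm (a - b)"
    using fld_lip[of "c1 (real K) / 2" "bW (real K) + 1" "bM (real K) + 1" \<tau> A] c1_pos[of "real K"]
    unfolding RT_def by auto
  show ?thesis by (rule lip_comp_cont[OF c i L(2) L(1)])
qed

lemma global:
  "\<exists>W M. is_solution \<tau> A W0 M0 W M \<and>
     (\<forall>W2 M2. is_solution \<tau> A W0 M0 W2 M2 \<longrightarrow> (\<forall>t\<ge>0. W2 t = W t \<and> M2 t = M t))"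
proof (intro exI conjI allI impI)
  have x0: "xs 0 = (W0, M0)" using xs_sol[of 0] by (simp add: sol_on_def)
  have der: "(xs has_vector_derivative Fld \<tau> A (xs t)) (at t within {0..})" if t: "t \<ge> 0" for t
  proof -
    have "(xs has_vector_derivative Fld \<tau> A (xs t)) (at t within {0..real (NN t)})"
      using xs_sol[of "NN t"] t NN[of t] unfolding sol_on_def by auto
    thus ?thesis using atw[OF t NN[of t]] by simp
  qed
  have cont: "continuous_on {0..} (\<lambda>s. Fld \<tau> A (xs s))"
    unfolding continuous_on_eq_continuous_within
  proof
    fix t :: real assume "t \<in> {0..}"
    hence t: "t \<ge> 0" by simp
    have "continuous (at t within {0..real (NN t)}) (\<lambda>s. Fld \<tau> A (xs s))"
      using xs_cont[of "NN t"] t NN[of t] unfolding continuous_on_eq_continuous_within by auto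
    thus "continuous (at t within {0..}) (\<lambda>s. Fld \<tau> A (xs s))" using atw[OF t NN[of t]] by simp
  qed
  show "is_solution \<tau> A W0 M0 (\<lambda>t. fst (xs t)) (\<lambda>t. snd (xs t))"
    unfolding is_solution_def
  proof (intro conjI allI impI exI[of _ "\<lambda>t. fst (Fld \<tau> A (xs t))"] exI[of _ "\<lambda>t. snd (Fld \<tau> A (xs t))"])
    show "fst (xs 0) = W0" "snd (xs 0) = M0" using x0 by auto
    show "sym_posdef (snd (xs t))" if "t \<ge> 0" for t
      using xs_sol[of "NN t"] that NN[of t] unfolding sol_on_def by auto
    show "continuous_on {0..} (\<lambda>t. fst (Fld \<tau> A (xs t)))" by (rule continuous_on_fst[OF cont])
    show "continuous_on {0..} (\<lambda>t. snd (Fld \<tau> A (xs t)))" by (rule continuous_on_snd[OF cont])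
    fix t :: real assume t: "t \<ge> 0"
    show "((\<lambda>t. fst (xs t)) has_vector_derivative fst (Fld \<tau> A (xs t))) (at t within {0..})"
      by (rule vd_fst[OF der[OF t]])
    show "((\<lambda>t. snd (xs t)) has_vector_derivative snd (Fld \<tau> A (xs t))) (at t within {0..})"
      by (rule vd_snd[OF der[OF t]])
    show "(1/2) *\<^sub>R fst (Fld \<tau> A (xs t)) = matrix_inv (snd (xs t)) ** fst (xs t) ** A - fst (xs t)"
      by (simp add: Fld_def)
    show "\<tau> *\<^sub>R snd (Fld \<tau> A (xs t)) = matrix_inv (snd (xs t)) ** fst (xs t) ** A ** transpose (fst (xs t)) ** matrix_inv (snd (xs t)) - snd (xs t)"
      using tau by (simp add: Fld_def)
  qed
  fix W2 M2 t
  assume sol2: "is_solution \<tau> A W0 M0 W2 M2" and t: "(0::real) \<le> t"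
  define y where "y s = (W2 s, M2 s)" for s
  obtain W' M' where WM: "\<forall>t\<ge>0. (W2 has_vector_derivative W' t) (at t within {0..}) \<and>
                 (M2 has_vector_derivative M' t) (at t within {0..}) \<and>
                 (1/2) *\<^sub>R W' t = matrix_inv (M2 t) ** W2 t ** A - W2 t \<and>
                 \<tau> *\<^sub>R M' t = matrix_inv (M2 t) ** W2 t ** A ** transpose (W2 t) ** matrix_inv (M2 t) - M2 t"
    using sol2 unfolding is_solution_def by blast
  have "sol_on (real (NN t)) y"
    unfolding sol_on_def
  proof (intro conjI ballI)
    show "y 0 = (W0, M0)" using sol2 by (simp add: y_def is_solution_def)
    fix s assume s: "s \<in> {0..real (NN t)}"
    show "sym_posdef (snd (y s))" using sol2 s by (simp add: y_def is_solution_def)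
    have s0: "s \<ge> 0" using s by simp
    have e1: "W' s = 2 *\<^sub>R (matrix_inv (M2 s) ** W2 s ** A - W2 s)"
      using WM s0 by (metis (no_types, lifting) scaleR_scaleR scaleR_one times_divide_eq_right
          divide_self_if zero_neq_numeral mult.commute times_divide_eq_left)
    have e2: "M' s = (1/\<tau>) *\<^sub>R (matrix_inv (M2 s) ** W2 s ** A ** transpose (W2 s) ** matrix_inv (M2 s) - M2 s)"
      using WM s0 tau by (metis scaleR_scaleR scaleR_one divide_inverse_commute divide_self_if
          less_irrefl mult_1)
    have "(y has_vector_derivative (W' s, M' s)) (at s within {0..})"
      unfolding y_def using WM s0 by (intro has_vector_derivative_Pair) auto
    hence "(y has_vector_derivative (W' s, M' s)) (at s within {0..real (NN t)})"
      by (rule has_vector_derivative_within_subset) auto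
    thus "(y has_vector_derivative Fld \<tau> A (y s)) (at s within {0..real (NN t)})"
      using e1 e2 by (simp add: Fld_def y_def)
  qed
  hence yt: "y t = xs t"
    using unique[OF _ xs_sol[of "NN t"]] t NN[of t] by auto
  show "W2 t = fst (xs t)" using yt by (metis y_def fst_conv)
  show "M2 t = snd (xs t)" using yt by (metis y_def snd_conv)
qed

end

theorem theorem3:
  fixes A :: "real^'n^'n" and W0 :: "real^'n^'k" and M0 :: "real^'k^'k" and \<tau> :: real
  assumes "CARD('k) < CARD('n)"
    and "sym_posdef A"
    and "\<tau> > 0"
    and "sym_posdef M0"
  shows "\<exists>W M. is_solution \<tau> A W0 M0 W M \<and>
           (\<forall>W2 M2. is_solution \<tau> A W0 M0 W2 M2 \<longrightarrow> (\<forall>t\<ge>0. W2 t = W t \<and> M2 t = M t))"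
  proof -
  interpret sys A \<tau> W0 M0 using assms by unfold_locales auto
  show ?thesis by (rule global)
qed

end
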